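(* Let $f,g\in F$ with $g\neq f$ be mutually singular with respect to each other, and let $\vec f=(f,g)$. If $T$ is a reasonable test, then $f(A^{\vec f}_{T,f})=g(A^{\vec f}_{T,g})=1$.
   Context: Let $\Omega=\{0,1\}$, $\Omega^\infty$ the set of infinite sequences $\omega=(\omega_1,\omega_2,\dots)$, and $\omega^t=(\omega_1,\dots,\omega_t)$ (also used for the cylinder set of all sequences with this prefix; $\omega^0=\emptyset$). $\mathcal G_t$ is the $\sigma$-algebra generated by the length-$t$ cylinders and $\mathcal G_\infty$ the $\sigma$-algebra generated by all cylinders. $\Delta(\Omega)$ is the set of probability distributions on $\Omega$; for $p\in\Delta(\Omega)$ and $x\in\Omega$, $p[x]$ is the probability of $x$. A forecasting strategy is a map $f:\bigcup_{t\ge0}(\Omega\times\Delta(\Omega)\times\Delta(\Omega))^t\to\Delta(\Omega)$; $F$ is the set of all forecasting strategies. Given an ordered pair $\vec f=(f,g)\in F\times F$ and $\omega\in\Omega^\infty$, the play path $(\omega,\vec f)\in(\Omega\times\Delta(\Omega)\times\Delta(\Omega))^\infty$ is defined recursively: $(\omega,\vec f)^0=\emptyset$ and its $t$-th entry is $(\omega_t,f((\omega,\vec f)^{t-1}),g((\omega,\vec f)^{t-1}))$. The pair $\vec f$ induces two probability measures on $(\Omega^\infty,\mathcal G_\infty)$, again denoted $f$ and $g$, determined by $f(\omega^t)=\prod_{n=1}^t f((\omega,\vec f)^{n-1})[\omega_n]$ and $g(\omega^t)=\prod_{n=1}^t g((\omega,\vec f)^{n-1})[\omega_n]$. A (cardinal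 comparison) test is a sequence $T=(T_t)_{t>0}$ of $\mathcal G_t$-measurable functions $T_t:(\Omega\times\Delta(\Omega)\times\Delta(\Omega))^\infty\to[0,1]$; write $T_t(\omega,\vec f)=T_t((\omega,\vec f))$ and $T(\omega,\vec f)=\lim_t T_t(\omega,\vec f)$ whenever the limit exists. For $\epsilon\in(0,1)$ let $L^{\vec f}_{T,\epsilon}=\{\omega:T(\omega,\vec f)\text{ exists and }>\epsilon\}$ and $R^{\vec f}_{T,\epsilon}=\{\omega:T(\omega,\vec f)\text{ exists and }<\epsilon\}$. $T$ is reasonable if for all $\vec f=(f,g)$ and measurable $A$: for $\epsilon\in(0,\frac12)$, if $g(A)>0$ and $f(A)<\frac{\epsilon}{1-\epsilon}g(A)$ then $g(A\cap R^{\vec f}_{T,\epsilon})>0$; and for $\epsilon\in(\frac12,1)$, if $f(A)>0$ and $g(A)<\frac{1-\epsilon}{\epsilon}f(A)$ then $f(A\cap L^{\vec f}_{T,\epsilon})>0$. Let $A^{\vec f}_{T,f}=\{\omega: T_t(\omega,\vec f)\to1\}$ and $A^{\vec f}_{T,g}=\{\omega: T_t(\omega,\vec f)\to0\}$. Two forecasting strategies $f\ne g$ are mutually singular with respect to each other if there exist disjoint sets $C_f,C_g\subseteq(\Omega\times\Delta(\Omega)\times\Delta(\Omega))^\infty$ with $f(\{\omega:(\omega,\vec f)\in C_f\})=g(\{\omega:(\omega,\vec f)\in C_g\})=1$, where $\vec f=(f,g)$ and $f,g$ on the left denote the induced measures. *)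

theory Defs
  imports "HOL-Probability.Probability"
begin

text \<open>Outcomes: Omega = {0,1} rendered as bool. Delta(Omega) = bool pmf, p[x] = pmf p x.
  Infinite sequences omega = (omega_1, omega_2, ...) are functions nat => bool with
  omega_{n+1} = omega n (0-based indexing).\<close>

type_synonym entry = "bool \<times> bool pmf \<times> bool pmf"
type_synonym history = "entry list"
type_synonym forecaster = "history \<Rightarrow> bool pmf"
type_synonym playpath = "nat \<Rightarrow> entry"

fun hist :: "(nat \<Rightarrow> bool) \<Rightarrow> forecaster \<Rightarrow> forecaster \<Rightarrow> nat \<Rightarrow> history" where
  "hist \<omega> f g 0 = []"
| "hist \<omega> f g (Suc n) = hist \<omega> f g n @ [(\<omega> n, f (hist \<omega> f g n), g (hist \<omega> f g n))]"

text \<open>The play path (omega, vec f); entry number n (0-based) is the (n+1)-th entry.\<close>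
definition path :: "(nat \<Rightarrow> bool) \<Rightarrow> forecaster \<Rightarrow> forecaster \<Rightarrow> playpath" where
  "path \<omega> f g n = (\<omega> n, f (hist \<omega> f g n), g (hist \<omega> f g n))"

definition Omega_inf :: "(nat \<Rightarrow> bool) measure" where
  "Omega_inf = PiM UNIV (\<lambda>_. count_space UNIV)"

definition cyl :: "(nat \<Rightarrow> bool) \<Rightarrow> nat \<Rightarrow> (nat \<Rightarrow> bool) set" where
  "cyl \<omega> t = {\<omega>'. \<forall>i<t. \<omega>' i = \<omega> i}"

text \<open>The probability measure induced on (Omega^infinity, G_infinity) by the forecasts of
  \<open>sel\<close> (which is f or g) along the play path of the pair (f,g).\<close>
definition induced :: "forecaster \<Rightarrow> forecaster \<Rightarrow> forecaster \<Rightarrow> (nat \<Rightarrow> bool) measure" where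
  "induced sel f g = (SOME M. prob_space M \<and> sets M = sets Omega_inf \<and>
      (\<forall>\<omega> t. emeasure M (cyl \<omega> t) = ennreal (\<Prod>n<t. pmf (sel (hist \<omega> f g n)) (\<omega> n))))"

definition measF :: "forecaster \<Rightarrow> forecaster \<Rightarrow> (nat \<Rightarrow> bool) measure" where
  "measF f g = induced f f g"

definition measG :: "forecaster \<Rightarrow> forecaster \<Rightarrow> (nat \<Rightarrow> bool) measure" where
  "measG f g = induced g f g"

text \<open>A test: T t for t > 0 takes values in [0,1] and is G_t-measurable, i.e. depends only
  on the first t entries of the play path. (T 0 is irrelevant.)\<close>
definition is_test :: "(nat \<Rightarrow> playpath \<Rightarrow> real) \<Rightarrow> bool" where
  "is_test T \<longleftrightarrow> (\<forall>t>0. \<forall>x. 0 \<le> T t x \<and> T t x \<le> 1) \<and>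
     (\<forall>t>0. \<forall>x y. (\<forall>i<t. x i = y i) \<longrightarrow> T t x = T t y)"

definition Lset :: "(nat \<Rightarrow> playpath \<Rightarrow> real) \<Rightarrow> forecaster \<Rightarrow> forecaster \<Rightarrow> real \<Rightarrow> (nat \<Rightarrow> bool) set" where
  "Lset T f g \<epsilon> = {\<omega>. convergent (\<lambda>t. T t (path \<omega> f g)) \<and> lim (\<lambda>t. T t (path \<omega> f g)) > \<epsilon>}"

definition Rset :: "(nat \<Rightarrow> playpath \<Rightarrow> real) \<Rightarrow> forecaster \<Rightarrow> forecaster \<Rightarrow> real \<Rightarrow> (nat \<Rightarrow> bool) set" where
  "Rset T f g \<epsilon> = {\<omega>. convergent (\<lambda>t. T t (path \<omega> f g)) \<and> lim (\<lambda>t. T t (path \<omega> f g)) < \<epsilon>}"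

definition reasonable :: "(nat \<Rightarrow> playpath \<Rightarrow> real) \<Rightarrow> bool" where
  "reasonable T \<longleftrightarrow> is_test T \<and>
    (\<forall>f g A. A \<in> sets Omega_inf \<longrightarrow>
      (\<forall>\<epsilon>. 0 < \<epsilon> \<and> \<epsilon> < 1/2 \<longrightarrow>
         measure (measG f g) A > 0 \<and> measure (measF f g) A < \<epsilon> / (1 - \<epsilon>) * measure (measG f g) A
         \<longrightarrow> measure (measG f g) (A \<inter> Rset T f g \<epsilon>) > 0) \<and>
      (\<forall>\<epsilon>. 1/2 < \<epsilon> \<and> \<epsilon> < 1 \<longrightarrow>
         measure (measF f g) A > 0 \<and> measure (measG f g) A < (1 - \<epsilon>) / \<epsilon> * measure (measF f g) A
         \<longrightarrow> measure (measF f g) (A \<inter> Lset T f g \<epsilon>) > 0))"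

definition AsetF :: "(nat \<Rightarrow> playpath \<Rightarrow> real) \<Rightarrow> forecaster \<Rightarrow> forecaster \<Rightarrow> (nat \<Rightarrow> bool) set" where
  "AsetF T f g = {\<omega>. (\<lambda>t. T t (path \<omega> f g)) \<longlonglongrightarrow> 1}"

definition AsetG :: "(nat \<Rightarrow> playpath \<Rightarrow> real) \<Rightarrow> forecaster \<Rightarrow> forecaster \<Rightarrow> (nat \<Rightarrow> bool) set" where
  "AsetG T f g = {\<omega>. (\<lambda>t. T t (path \<omega> f g)) \<longlonglongrightarrow> 0}"

definition mutually_singular :: "forecaster \<Rightarrow> forecaster \<Rightarrow> bool" where
  "mutually_singular f g \<longleftrightarrow> f \<noteq> g \<and>
    (\<exists>Cf Cg :: playpath set. Cf \<inter> Cg = {} \<and>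
       measure (measF f g) {\<omega>. path \<omega> f g \<in> Cf} = 1 \<and>
       measure (measG f g) {\<omega>. path \<omega> f g \<in> Cg} = 1)"

end

theory Submission
  imports Defs
begin

abbreviation BM :: "nat \<Rightarrow> bool measure" where "BM \<equiv> \<lambda>_. count_space UNIV"

lemma disc_sets:
  fixes J :: "nat set" assumes "finite J"
  shows "sets (PiM J BM) = Pow (space (PiM J BM))"
proof (intro antisym subsetI)
  fix A assume "A \<in> Pow (space (PiM J BM))"
  hence A: "A \<subseteq> space (PiM J BM)" by auto
  have fin: "finite (space (PiM J BM))" using assms by (simp add: space_PiM finite_PiE)
  have "A = (\<Union>x\<in>A. PiE J (\<lambda>i. {x i}))"
  proof (intro antisym subsetI)
    fix y assume "y \<in> A" thus "y \<in> (\<Union>x\<in>A. PiE J (\<lambda>i. {x i}))"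
      using A by (auto simp: space_PiM PiE_iff intro!: bexI[of _ y])
  next
    fix y assume "y \<in> (\<Union>x\<in>A. PiE J (\<lambda>i. {x i}))"
    then obtain x where "x \<in> A" "y \<in> PiE J (\<lambda>i. {x i})" by auto
    moreover have "x \<in> extensional J" using A \<open>x \<in> A\<close> by (auto simp: space_PiM PiE_iff)
    ultimately have "y = x" by (auto simp: PiE_iff extensional_def fun_eq_iff)
    thus "y \<in> A" using \<open>x \<in> A\<close> by simp
  qed
  also have "\<dots> \<in> sets (PiM J BM)"
    using finite_subset[OF A fin] assms
    by (intro sets.finite_UN) (auto intro!: sets_PiM_I_countable countable_finite)
  finally show "A \<in> sets (PiM J BM)" .
qed (use sets.sets_into_space in auto)

lemma hist_cong: "(\<forall>j<n. x j = y j) \<Longrightarrow> hist x f g n = hist y f g n"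
  by (induction n) auto

lemma measurable_disc:
  assumes "finite J" "\<And>x. x \<in> space (PiM J BM) \<Longrightarrow> h x \<in> space N"
  shows "h \<in> measurable (PiM J BM) N"
proof -
  have "h \<in> measurable (count_space (space (PiM J BM))) N"
    using assms(2) by (auto simp: measurable_def)
  moreover have "sets (PiM J BM) = sets (count_space (space (PiM J BM)))"
    using disc_sets[OF assms(1)] by simp
  ultimately show ?thesis using measurable_cong_sets[OF _ refl] by blast
qed



lemma pmf_in_subprob: "measure_pmf p \<in> space (subprob_algebra (count_space UNIV))"
  by (auto simp: space_subprob_algebra prob_space_imp_subprob_space prob_space_measure_pmf)

lemma exists_induced:
  fixes sel f g :: forecaster
  shows "\<exists>M. prob_space M \<and> sets M = sets Omega_inf \<and>
      (\<forall>\<omega> t. emeasure M (cyl \<omega> t) = ennreal (\<Prod>n<t. pmf (sel (hist \<omega> f g n)) (\<omega> n)))"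
proof -
  define P where "P = (\<lambda>i (x::nat \<Rightarrow> bool). measure_pmf (sel (hist x f g i)))"
  interpret IT: Ionescu_Tulcea P BM
    by (rule Ionescu_Tulcea.intro)
       (auto intro!: measurable_disc simp: P_def pmf_in_subprob prob_space_measure_pmf)
  have key: "\<And>v. v \<in> space (PiM {0..<t} BM) \<Longrightarrow>
     emeasure (IT.C 0 t (\<lambda>_. undefined)) {v} = ennreal (\<Prod>n<t. pmf (sel (hist v f g n)) (v n))" for t
  proof (induction t)
    case 0
    then have "v = (\<lambda>_. undefined)" by (auto simp: space_PiM PiE_iff extensional_def fun_eq_iff)
    moreover have "{v} \<in> sets (PiM {0..<0} BM)" using 0 disc_sets[of "{0..<0}"] by auto
    ultimately show ?case by simp
  next
    case (Suc t)
    let ?w = "restrict v {0..<t}"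
    have u0: "(\<lambda>_. undefined) \<in> space (PiM {0..<0} BM)" by (simp add: space_PiM)
    have Csets: "sets (IT.C 0 t (\<lambda>_. undefined)) = sets (PiM {0..<t} BM)"
      using IT.sets_C[OF u0, of t] by simp
    have wsp: "?w \<in> space (PiM {0..<t} BM)" by (auto simp: space_PiM)
    have vsets: "{v} \<in> sets (PiM {0..<Suc t} BM)" using Suc.prems disc_sets[of "{0..<Suc t}"] by auto
    have "emeasure (IT.C 0 (Suc t) (\<lambda>_. undefined)) {v}
        = (\<integral>\<^sup>+y. emeasure (IT.eP t y) {v} \<partial>IT.C 0 t (\<lambda>_. undefined))"
      using vsets
      by (simp, subst emeasure_bind[where N="PiM {0..<Suc t} BM"])
         (auto simp: IT.space_C space_PiM_empty_iff Csets measurable_cong_sets[OF Csets refl] IT.measurable_eP)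
    also have "\<dots> = (\<integral>\<^sup>+y. ennreal (pmf (sel (hist v f g t)) (v t)) * indicator {?w} y \<partial>IT.C 0 t (\<lambda>_. undefined))"
    proof (rule nn_integral_cong)
      fix y assume "y \<in> space (IT.C 0 t (\<lambda>_. undefined))"
      hence ysp: "y \<in> space (PiM {0..<t} BM)" using IT.space_C[OF u0, of t] by simp
      have "emeasure (IT.eP t y) {v} = P t y ((\<lambda>x. y(t := x)) -` {v} \<inter> space (BM t))"
        by (rule IT.emeasure_eP[OF ysp vsets])
      also have "\<dots> = ennreal (pmf (sel (hist v f g t)) (v t)) * indicator {?w} y"
      proof (cases "y = ?w")
        case True
        have "(\<lambda>x. y(t := x)) -` {v} \<inter> space (BM t) = {v t}"
          using Suc.prems True by (auto simp: space_PiM PiE_iff extensional_def fun_eq_iff)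
        moreover have "hist y f g t = hist v f g t" using True by (intro hist_cong) auto
        ultimately show ?thesis using True by (simp add: P_def emeasure_pmf_single)
      next
        case False
        then obtain j where j: "y j \<noteq> ?w j" using fun_eq_iff[of y ?w] by blast
        have "j < t" using j ysp by (cases "j < t") (auto simp: space_PiM PiE_iff extensional_def)
        hence "(\<lambda>x. y(t := x)) -` {v} \<inter> space (BM t) = {}"
          using j by (auto simp: fun_eq_iff)
        thus ?thesis using False by simp
      qed
      finally show "emeasure (IT.eP t y) {v} = ennreal (pmf (sel (hist v f g t)) (v t)) * indicator {?w} y" .
    qed
    also have "\<dots> = ennreal (pmf (sel (hist v f g t)) (v t)) * emeasure (IT.C 0 t (\<lambda>_. undefined)) {?w}"
      using disc_sets[of "{0..<t}"] wsp Csets by (intro nn_integral_cmult_indicator) auto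
    also have "emeasure (IT.C 0 t (\<lambda>_. undefined)) {?w} = ennreal (\<Prod>n<t. pmf (sel (hist v f g n)) (v n))"
    proof -
      have eq: "(\<Prod>n<t. pmf (sel (hist ?w f g n)) (?w n)) = (\<Prod>n<t. pmf (sel (hist v f g n)) (v n))"
        by (intro prod.cong refl) (auto intro!: arg_cong2[where f=pmf] arg_cong[where f=sel] hist_cong)
      show ?thesis by (subst Suc.IH[OF wsp]) (rule arg_cong[where f=ennreal, OF eq])
    qed
    finally show ?case by (simp add: ennreal_mult[symmetric] prod_nonneg mult.commute)
  qed
  have cyl_eq: "cyl \<omega> t = prod_emb UNIV BM {0..<t} {restrict \<omega> {0..<t}}" for \<omega> t
    by (auto simp: cyl_def prod_emb_def fun_eq_iff space_PiM) metis+
  have sing: "{restrict \<omega> {0..<t}} \<in> sets (PiM {0..<t} BM)" for \<omega> t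
    using disc_sets[of "{0..<t}"] by (auto simp: space_PiM)
  have cylm: "emeasure IT.PF.lim (cyl \<omega> t) = ennreal (\<Prod>n<t. pmf (sel (hist \<omega> f g n)) (\<omega> n))" for \<omega> t
  proof -
    have "emeasure IT.PF.lim (cyl \<omega> t) = emeasure (IT.CI {0..<t}) {restrict \<omega> {0..<t}}"
      unfolding cyl_eq by (rule IT.lim[OF _ sing]) simp
    also have "\<dots> = emeasure (IT.C 0 t (\<lambda>_. undefined)) (prod_emb {0..<t} BM {0..<t} {restrict \<omega> {0..<t}})"
      by (rule IT.emeasure_CI[OF subset_refl sing])
    also have "prod_emb {0..<t} BM {0..<t} {restrict \<omega> {0..<t}} = {restrict \<omega> {0..<t}}"
      by (rule prod_emb_id) auto
    also have "emeasure (IT.C 0 t (\<lambda>_. undefined)) {restrict \<omega> {0..<t}}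
       = ennreal (\<Prod>n<t. pmf (sel (hist (restrict \<omega> {0..<t}) f g n)) (restrict \<omega> {0..<t} n))"
      by (rule key) (auto simp: space_PiM)
    also have "(\<Prod>n<t. pmf (sel (hist (restrict \<omega> {0..<t}) f g n)) (restrict \<omega> {0..<t} n))
        = (\<Prod>n<t. pmf (sel (hist \<omega> f g n)) (\<omega> n))"
      by (intro prod.cong refl) (auto intro!: arg_cong2[where f=pmf] arg_cong[where f=sel] hist_cong)
    finally show ?thesis .
  qed
  have "prob_space IT.PF.lim"
  proof
    have "space IT.PF.lim = cyl (\<lambda>_. undefined) 0" by (simp add: cyl_def space_PiM)
    thus "emeasure IT.PF.lim (space IT.PF.lim) = 1" using cylm[of _ 0] by simp
  qed
  moreover have "sets IT.PF.lim = sets Omega_inf" by (simp add: Omega_inf_def)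
  ultimately show ?thesis using cylm by blast
qed

lemma induced_props:
  "prob_space (induced sel f g) \<and> sets (induced sel f g) = sets Omega_inf \<and>
      (\<forall>\<omega> t. emeasure (induced sel f g) (cyl \<omega> t) = ennreal (\<Prod>n<t. pmf (sel (hist \<omega> f g n)) (\<omega> n)))"
  unfolding induced_def by (rule someI_ex[OF exists_induced])



lemma T_meas:
  assumes "is_test T" "0 < t"
  shows "(\<lambda>\<omega>. T t (path \<omega> f g)) \<in> borel_measurable Omega_inf"
proof -
  have eq: "T t (path \<omega> f g) = T t (path (restrict \<omega> {0..<t}) f g)" for \<omega>
  proof -
    have "\<forall>i<t. path \<omega> f g i = path (restrict \<omega> {0..<t}) f g i"
    proof (intro allI impI)
      fix i assume "i < t"
      moreover have "hist \<omega> f g i = hist (restrict \<omega> {0..<t}) f g i"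
        using \<open>i < t\<close> by (intro hist_cong) auto
      ultimately show "path \<omega> f g i = path (restrict \<omega> {0..<t}) f g i"
        by (simp add: path_def)
    qed
    thus ?thesis using assms unfolding is_test_def by blast
  qed
  have "(\<lambda>x. T t (path x f g)) \<circ> (\<lambda>\<omega>. restrict \<omega> {0..<t}) \<in> borel_measurable Omega_inf"
    unfolding Omega_inf_def
    by (rule measurable_comp[OF measurable_restrict_subset measurable_disc]) auto
  thus ?thesis by (simp add: comp_def eq[symmetric])
qed

lemma LSuc: "(\<lambda>n. f (Suc n)) \<longlonglongrightarrow> l \<longleftrightarrow> (f::nat\<Rightarrow>real) \<longlonglongrightarrow> l"
  by (blast intro: LIMSEQ_Suc LIMSEQ_imp_Suc)

lemma conv_shift: "convergent (s::nat \<Rightarrow> real) \<longleftrightarrow> convergent (\<lambda>n. s (Suc n))"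
  by (simp add: convergent_def LSuc)

lemma lim_shift: "lim (s::nat \<Rightarrow> real) = lim (\<lambda>n. s (Suc n))"
  by (simp add: lim_def LSuc)

lemma space_Omega_inf[simp]: "space Omega_inf = UNIV"
  by (simp add: Omega_inf_def space_PiM)

lemma sets_L:
  assumes "is_test T"
  shows "Lset T f g e \<in> sets Omega_inf" "Rset T f g e \<in> sets Omega_inf"
    "AsetF T f g \<in> sets Omega_inf" "AsetG T f g \<in> sets Omega_inf"
proof -
  define X where "X t \<omega> = T (Suc t) (path \<omega> f g)" for t \<omega>
  have [measurable]: "X t \<in> borel_measurable Omega_inf" for t
    unfolding X_def by (rule T_meas[OF assms]) simp
  have CS: "{\<omega> \<in> space Omega_inf. Cauchy (\<lambda>t. X t \<omega>)} \<in> sets Omega_inf"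
    by (rule sets_Collect_Cauchy) simp
  have [measurable]: "(\<lambda>\<omega>. lim (\<lambda>t. X t \<omega>)) \<in> borel_measurable Omega_inf"
    by (rule borel_measurable_lim_metric) simp
  have conv: "convergent (\<lambda>t. T t (path \<omega> f g)) \<longleftrightarrow> Cauchy (\<lambda>t. X t \<omega>)" for \<omega>
    by (subst conv_shift) (simp add: X_def Cauchy_convergent_iff)
  have lm: "lim (\<lambda>t. T t (path \<omega> f g)) = lim (\<lambda>t. X t \<omega>)" for \<omega>
    by (subst lim_shift) (simp add: X_def)
  have tends: "(\<lambda>t. T t (path \<omega> f g)) \<longlonglongrightarrow> c \<longleftrightarrow> Cauchy (\<lambda>t. X t \<omega>) \<and> lim (\<lambda>t. X t \<omega>) = c" for \<omega> c
    by (metis conv lm convergent_LIMSEQ_iff limI convergent_def)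
  have "Lset T f g e = {\<omega> \<in> space Omega_inf. Cauchy (\<lambda>t. X t \<omega>)} \<inter> {\<omega> \<in> space Omega_inf. e < lim (\<lambda>t. X t \<omega>)}"
    by (auto simp: Lset_def conv lm)
  also have "\<dots> \<in> sets Omega_inf" using CS by measurable
  finally show "Lset T f g e \<in> sets Omega_inf" .
  have "Rset T f g e = {\<omega> \<in> space Omega_inf. Cauchy (\<lambda>t. X t \<omega>)} \<inter> {\<omega> \<in> space Omega_inf. lim (\<lambda>t. X t \<omega>) < e}"
    by (auto simp: Rset_def conv lm)
  also have "\<dots> \<in> sets Omega_inf" using CS by measurable
  finally show "Rset T f g e \<in> sets Omega_inf" .
  have "AsetF T f g = {\<omega> \<in> space Omega_inf. Cauchy (\<lambda>t. X t \<omega>)} \<inter> {\<omega> \<in> space Omega_inf. lim (\<lambda>t. X t \<omega>) = 1}"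
    by (auto simp: AsetF_def tends)
  also have "\<dots> \<in> sets Omega_inf" using CS by measurable
  finally show "AsetF T f g \<in> sets Omega_inf" .
  have "AsetG T f g = {\<omega> \<in> space Omega_inf. Cauchy (\<lambda>t. X t \<omega>)} \<inter> {\<omega> \<in> space Omega_inf. lim (\<lambda>t. X t \<omega>) = 0}"
    by (auto simp: AsetG_def tends)
  also have "\<dots> \<in> sets Omega_inf" using CS by measurable
  finally show "AsetG T f g \<in> sets Omega_inf" .
qed

lemma lim_bounds:
  assumes "is_test T" "convergent (\<lambda>t. T t p)"
  shows "0 \<le> lim (\<lambda>t. T t p)" "lim (\<lambda>t. T t p) \<le> 1"
proof -
  have c: "(\<lambda>t. T (Suc t) p) \<longlonglongrightarrow> lim (\<lambda>t. T t p)"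
    using assms(2) by (intro LIMSEQ_Suc) (simp add: convergent_LIMSEQ_iff)
  have b: "0 \<le> T (Suc t) p \<and> T (Suc t) p \<le> 1" for t using assms(1) unfolding is_test_def by blast
  show "0 \<le> lim (\<lambda>t. T t p)" using b by (intro LIMSEQ_le_const[OF c]) auto
  show "lim (\<lambda>t. T t p) \<le> 1" using b by (intro LIMSEQ_le_const2[OF c]) auto
qed



lemma arch_aux: "0 < (d::real) \<Longrightarrow> 1/d < real k \<Longrightarrow> 1/(real k + 3) < d"
proof -
  assume d: "0 < d" and k: "1/d < real k"
  have "1 < real k * d" using k d by (simp add: divide_less_eq)
  hence "1 < (real k + 3) * d" using d by (simp add: distrib_right)
  thus ?thesis by (simp add: divide_less_eq mult.commute)
qed
lemma aux3: "1/(real k + 3) < 1/2" "0 < 1/(real k + 3)"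
proof -
  have "(2::real) < real k + 3" by simp
  thus "1/(real k + 3) < 1/2" by (intro divide_strict_left_mono) auto
qed simp

theorem mainTheorem12:
  fixes f g :: forecaster and T :: "nat \<Rightarrow> playpath \<Rightarrow> real"
  assumes "g \<noteq> f"
    and "mutually_singular f g"
    and "reasonable T"
  shows "measure (measF f g) (AsetF T f g) = 1 \<and> measure (measG f g) (AsetG T f g) = 1"
proof -
  define MF where "MF = measF f g"
  define MG where "MG = measG f g"
  interpret F: prob_space MF using induced_props unfolding MF_def measF_def by blast
  interpret G: prob_space MG using induced_props unfolding MG_def measG_def by blast
  have sF: "sets MF = sets Omega_inf" using induced_props unfolding MF_def measF_def by blast
  have sG: "sets MG = sets Omega_inf" using induced_props unfolding MG_def measG_def by blast
  have test: "is_test T" using assms(3) unfolding reasonable_def by blast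
  have reasL: "\<And>A e. A \<in> sets Omega_inf \<Longrightarrow> 1/2 < e \<Longrightarrow> e < 1 \<Longrightarrow> measure MF A > 0 \<Longrightarrow>
      measure MG A < (1 - e) / e * measure MF A \<Longrightarrow> measure MF (A \<inter> Lset T f g e) > 0"
    using assms(3) unfolding reasonable_def MF_def MG_def by blast
  have reasR: "\<And>A e. A \<in> sets Omega_inf \<Longrightarrow> 0 < e \<Longrightarrow> e < 1/2 \<Longrightarrow> measure MG A > 0 \<Longrightarrow>
      measure MF A < e / (1 - e) * measure MG A \<Longrightarrow> measure MG (A \<inter> Rset T f g e) > 0"
    using assms(3) unfolding reasonable_def MF_def MG_def by blast
  obtain Cf Cg :: "playpath set" where disj: "Cf \<inter> Cg = {}"
    and mCf: "measure MF {\<omega>. path \<omega> f g \<in> Cf} = 1" and mCg: "measure MG {\<omega>. path \<omega> f g \<in> Cg} = 1"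
    using assms(2) unfolding mutually_singular_def MF_def MG_def by blast
  define CF where "CF = {\<omega>. path \<omega> f g \<in> Cf}"
  define CG where "CG = {\<omega>. path \<omega> f g \<in> Cg}"
  have CFs: "CF \<in> sets Omega_inf"
    using mCf measure_notin_sets[of CF MF] sF unfolding CF_def by fastforce
  have CGs: "CG \<in> sets Omega_inf"
    using mCg measure_notin_sets[of CG MG] sG unfolding CG_def by fastforce
  have CFCG: "CF \<inter> CG = {}" using disj unfolding CF_def CG_def by auto
  have spF: "space MF = UNIV" using sets_eq_imp_space_eq[OF sF] by simp
  have spG: "space MG = UNIV" using sets_eq_imp_space_eq[OF sG] by simp
  have G_CF: "measure MG CF = 0"
  proof -
    have "measure MG CF \<le> measure MG (space MG - CG)"
      using CFCG CFs CGs sG spG sets.compl_sets[of CG Omega_inf] by (intro G.finite_measure_mono) auto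
    also have "\<dots> = 0" using G.prob_compl[of CG] CGs sG mCg unfolding CG_def by simp
    finally show ?thesis by (simp add: antisym)
  qed
  have F_CG: "measure MF CG = 0"
  proof -
    have "measure MF CG \<le> measure MF (space MF - CF)"
      using CFCG CFs CGs sF spF sets.compl_sets[of CF Omega_inf] by (intro F.finite_measure_mono) auto
    also have "\<dots> = 0" using F.prob_compl[of CF] CFs sF mCf unfolding CF_def by simp
    finally show ?thesis by (simp add: antisym)
  qed
  have nullF: "CF - Lset T f g e \<in> null_sets MF" if e: "1/2 < e" "e < 1" for e
  proof -
    define A where "A = CF - Lset T f g e"
    have As: "A \<in> sets Omega_inf" unfolding A_def using CFs sets_L(1)[OF test] by auto
    have "measure MG A \<le> measure MG CF" unfolding A_def using CFs sG by (intro G.finite_measure_mono) auto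
    hence GA: "measure MG A = 0" using G_CF by (simp add: antisym)
    have "measure MF A = 0"
    proof (rule ccontr)
      assume "measure MF A \<noteq> 0"
      hence pos: "measure MF A > 0" by (simp add: less_le)
      have "0 < (1 - e) / e * measure MF A" using e pos by simp
      hence "measure MF (A \<inter> Lset T f g e) > 0" using reasL[OF As e pos] GA by simp
      moreover have "A \<inter> Lset T f g e = {}" unfolding A_def by blast
      ultimately show False by simp
    qed
    thus ?thesis using As sF unfolding A_def by (simp add: F.emeasure_eq_measure null_sets_def)
  qed
  have subF: "CF - AsetF T f g \<subseteq> (\<Union>k::nat. CF - Lset T f g (1 - 1 / (real k + 3)))"
  proof
    fix \<omega> assume w: "\<omega> \<in> CF - AsetF T f g"
    show "\<omega> \<in> (\<Union>k::nat. CF - Lset T f g (1 - 1 / (real k + 3)))"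
    proof (rule ccontr)
      assume "\<omega> \<notin> (\<Union>k::nat. CF - Lset T f g (1 - 1 / (real k + 3)))"
      hence inL: "\<And>k::nat. \<omega> \<in> Lset T f g (1 - 1 / (real k + 3))" using w by blast
      hence cv: "convergent (\<lambda>t. T t (path \<omega> f g))" unfolding Lset_def by blast
      let ?l = "lim (\<lambda>t. T t (path \<omega> f g))"
      have gt: "\<And>k::nat. 1 - 1 / (real k + 3) < ?l" using inL unfolding Lset_def by blast
      have le1: "?l \<le> 1" using lim_bounds[OF test cv] by simp
      have "?l = 1"
      proof (rule ccontr)
        assume "?l \<noteq> 1"
        hence d: "0 < 1 - ?l" using le1 by simp
        obtain k :: nat where "1 / (1 - ?l) < real k" using reals_Archimedean2 by blast
        hence "1 / (real k + 3) < 1 - ?l" by (rule arch_aux[OF d])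
        thus False using gt[of k] by simp
      qed
      hence "\<omega> \<in> AsetF T f g" using cv unfolding AsetF_def by (simp add: convergent_LIMSEQ_iff)
      thus False using w by blast
    qed
  qed
  have "(\<Union>k::nat. CF - Lset T f g (1 - 1 / (real k + 3))) \<in> null_sets MF"
  proof (rule null_sets_UN)
    fix k :: nat show "CF - Lset T f g (1 - 1 / (real k + 3)) \<in> null_sets MF"
      using aux3[of k] by (intro nullF) linarith+
  qed
  hence nF: "CF - AsetF T f g \<in> null_sets MF"
    by (rule null_sets_subset[OF _ _ subF]) (simp only: sF, intro sets.Diff CFs sets_L(3)[OF test])
  have "measure MF (CF - (CF - AsetF T f g)) = measure MF CF"
    by (rule measure_Diff_null_set[OF _ nF]) (simp only: sF CFs)
  hence "measure MF (CF \<inter> AsetF T f g) = 1" using mCf unfolding CF_def by (simp add: Diff_Diff_Int)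
  moreover have "measure MF (CF \<inter> AsetF T f g) \<le> measure MF (AsetF T f g)"
    using sets_L(3)[OF test] sF by (intro F.finite_measure_mono) auto
  ultimately have resF: "measure MF (AsetF T f g) = 1" using F.prob_le_1[of "AsetF T f g"] by simp
  have nullG: "CG - Rset T f g e \<in> null_sets MG" if e: "0 < e" "e < 1/2" for e
  proof -
    define A where "A = CG - Rset T f g e"
    have As: "A \<in> sets Omega_inf" unfolding A_def using CGs sets_L(2)[OF test] by auto
    have "measure MF A \<le> measure MF CG" unfolding A_def using CGs sF by (intro F.finite_measure_mono) auto
    hence FA: "measure MF A = 0" using F_CG by (simp add: antisym)
    have "measure MG A = 0"
    proof (rule ccontr)
      assume "measure MG A \<noteq> 0"
      hence pos: "measure MG A > 0" by (simp add: less_le)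
      have "0 < e / (1 - e) * measure MG A" using e pos by simp
      hence "measure MG (A \<inter> Rset T f g e) > 0" using reasR[OF As e pos] FA by simp
      moreover have "A \<inter> Rset T f g e = {}" unfolding A_def by blast
      ultimately show False by simp
    qed
    thus ?thesis using As sG unfolding A_def by (simp add: G.emeasure_eq_measure null_sets_def)
  qed
  have subG: "CG - AsetG T f g \<subseteq> (\<Union>k::nat. CG - Rset T f g (1 / (real k + 3)))"
  proof
    fix \<omega> assume w: "\<omega> \<in> CG - AsetG T f g"
    show "\<omega> \<in> (\<Union>k::nat. CG - Rset T f g (1 / (real k + 3)))"
    proof (rule ccontr)
      assume "\<omega> \<notin> (\<Union>k::nat. CG - Rset T f g (1 / (real k + 3)))"
      hence inR: "\<And>k::nat. \<omega> \<in> Rset T f g (1 / (real k + 3))" using w by blast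
      hence cv: "convergent (\<lambda>t. T t (path \<omega> f g))" unfolding Rset_def by blast
      let ?l = "lim (\<lambda>t. T t (path \<omega> f g))"
      have lt: "\<And>k::nat. ?l < 1 / (real k + 3)" using inR unfolding Rset_def by blast
      have ge0: "0 \<le> ?l" using lim_bounds[OF test cv] by simp
      have "?l = 0"
      proof (rule ccontr)
        assume "?l \<noteq> 0"
        hence d: "0 < ?l" using ge0 by simp
        obtain k :: nat where "1 / ?l < real k" using reals_Archimedean2 by blast
        hence "1 / (real k + 3) < ?l" by (rule arch_aux[OF d])
        thus False using lt[of k] by simp
      qed
      hence "\<omega> \<in> AsetG T f g" using cv unfolding AsetG_def by (simp add: convergent_LIMSEQ_iff)
      thus False using w by blast
    qed
  qed
  have "(\<Union>k::nat. CG - Rset T f g (1 / (real k + 3))) \<in> null_sets MG"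
  proof (rule null_sets_UN)
    fix k :: nat show "CG - Rset T f g (1 / (real k + 3)) \<in> null_sets MG"
      using aux3[of k] by (intro nullG) linarith+
  qed
  hence nG: "CG - AsetG T f g \<in> null_sets MG"
    by (rule null_sets_subset[OF _ _ subG]) (simp only: sG, intro sets.Diff CGs sets_L(4)[OF test])
  have "measure MG (CG - (CG - AsetG T f g)) = measure MG CG"
    by (rule measure_Diff_null_set[OF _ nG]) (simp only: sG CGs)
  hence "measure MG (CG \<inter> AsetG T f g) = 1" using mCg unfolding CG_def by (simp add: Diff_Diff_Int)
  moreover have "measure MG (CG \<inter> AsetG T f g) \<le> measure MG (AsetG T f g)"
    using sets_L(4)[OF test] sG by (intro G.finite_measure_mono) auto
  ultimately have resG: "measure MG (AsetG T f g) = 1" using G.prob_le_1[of "AsetG T f g"] by simp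
  show ?thesis using resF resG unfolding MF_def MG_def by simp
qed


end
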